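(* (a) $crx_1(K_n)=crx_2(K_n)=3$ for every $n\ge 3$. (b) For every $k\ge 3$ there exists $N=N(k)$ such that $crx_k(K_n)=2k-1$ for all $n\ge N$.
   Context: $K_n$ is the complete graph on $n$ vertices. An edge-coloured cycle is rainbow if its edges have distinct colours. For a graph $G$ in which any $k$ vertices lie on a common cycle, $crx_k(G)$ is the minimum number of colours in an edge-colouring of $G$ such that every set of $k$ vertices of $G$ lies in some rainbow cycle. *)

theory Defs
  imports Main
begin

text \<open>The complete graph K_n has vertex set {0..<n} and an edge between any two
distinct vertices.\<close>

definition edge_colouring :: "nat \<Rightarrow> nat \<Rightarrow> (nat \<Rightarrow> nat \<Rightarrow> nat) \<Rightarrow> bool" where
  "edge_colouring n m c \<longleftrightarrow>
     (\<forall>u<n. \<forall>v<n. u \<noteq> v \<longrightarrow> c u v = c v u \<and> c u v < m)"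

definition rainbow_cycle :: "nat \<Rightarrow> (nat \<Rightarrow> nat \<Rightarrow> nat) \<Rightarrow> nat list \<Rightarrow> bool" where
  "rainbow_cycle n c vs \<longleftrightarrow>
     3 \<le> length vs \<and> distinct vs \<and> set vs \<subseteq> {..<n} \<and>
     inj_on (\<lambda>i. c (vs ! i) (vs ! ((i + 1) mod length vs))) {..<length vs}"

definition k_rainbow_cyclic :: "nat \<Rightarrow> nat \<Rightarrow> (nat \<Rightarrow> nat \<Rightarrow> nat) \<Rightarrow> bool" where
  "k_rainbow_cyclic n k c \<longleftrightarrow>
     (\<forall>S. S \<subseteq> {..<n} \<and> card S = k \<longrightarrow> (\<exists>vs. rainbow_cycle n c vs \<and> S \<subseteq> set vs))"

definition crx :: "nat \<Rightarrow> nat \<Rightarrow> nat" where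
  "crx k n = (LEAST m. \<exists>c. edge_colouring n m c \<and> k_rainbow_cyclic n k c)"

end

theory Submission
  imports Defs "HOL-Library.Ramsey" Complex_Main
begin

lemma rainbow_len_le:
  assumes "rainbow_cycle n c vs" "edge_colouring n m c"
  shows "length vs \<le> m"
proof -
  let ?L = "length vs"
  let ?col = "\<lambda>i. c (vs ! i) (vs ! ((i + 1) mod ?L))"
  have L3: "3 \<le> ?L" and d: "distinct vs" and sub: "set vs \<subseteq> {..<n}"
    and inj: "inj_on ?col {..<?L}" using assms(1) by (auto simp: rainbow_cycle_def)
  have "?col ` {..<?L} \<subseteq> {..<m}"
  proof
    fix y assume "y \<in> ?col ` {..<?L}"
    then obtain i where i: "i < ?L" "y = ?col i" by auto
    have i2: "(i + 1) mod ?L < ?L" using L3 by (intro mod_less_divisor) linarith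
    have ne: "i \<noteq> (i + 1) mod ?L"
    proof
      assume "i = (i + 1) mod ?L"
      moreover have "i + 1 < ?L \<or> i + 1 = ?L" using i(1) by linarith
      ultimately show False using L3 by auto
    qed
    have "vs ! i \<noteq> vs ! ((i + 1) mod ?L)" using d i(1) i2 ne by (simp add: nth_eq_iff_index_eq)
    moreover have "vs ! i < n" "vs ! ((i + 1) mod ?L) < n" using sub i(1) i2 nth_mem by force+
    ultimately show "y \<in> {..<m}" using assms(2) i(2) by (auto simp: edge_colouring_def)
  qed
  then have "card {..<?L} \<le> card {..<m}" using inj by (intro card_inj_on_le) auto
  then show ?thesis by simp
qed

lemma mono_cycle_long:
  assumes rc: "rainbow_cycle n c vs" and HS: "H \<subseteq> set vs" and cH: "card H = k"
    and mono: "\<forall>u\<in>H. \<forall>v\<in>H. u \<noteq> v \<longrightarrow> c u v = i"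
  shows "2 * k - 1 \<le> length vs"
proof -
  let ?L = "length vs"
  let ?col = "\<lambda>j. c (vs ! j) (vs ! ((j + 1) mod ?L))"
  let ?sc = "\<lambda>j. (j + 1) mod ?L"
  have L3: "3 \<le> ?L" and d: "distinct vs" and inj: "inj_on ?col {..<?L}"
    using rc by (auto simp: rainbow_cycle_def)
  define P where "P = {j. j < ?L \<and> vs ! j \<in> H}"
  define Q where "Q = {j \<in> P. ?sc j \<notin> P}"
  have finP: "finite P" unfolding P_def by auto
  have "(\<lambda>j. vs ! j) ` P = H"
  proof
    show "(!) vs ` P \<subseteq> H" unfolding P_def by auto
    show "H \<subseteq> (!) vs ` P"
    proof
      fix h assume "h \<in> H"
      then have "h \<in> set vs" using HS by auto
      then obtain j where "j < ?L" "vs ! j = h" by (auto simp: in_set_conv_nth)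
      then show "h \<in> (!) vs ` P" unfolding P_def using \<open>h \<in> H\<close> by auto
    qed
  qed
  moreover have "inj_on (\<lambda>j. vs ! j) P" using d unfolding P_def inj_on_def
    by (auto simp: nth_eq_iff_index_eq)
  ultimately have cP: "card P = k" using cH card_image by fastforce
  have sc_lt: "?sc j < ?L" for j using L3 by (intro mod_less_divisor) linarith
  have sc_ne: "?sc j \<noteq> j" if "j < ?L" for j
  proof
    assume a: "?sc j = j"
    have "j + 1 < ?L \<or> j + 1 = ?L" using that by linarith
    then show False using a L3 by auto
  qed
  have sc_inj: "inj_on ?sc {..<?L}"
  proof (rule inj_onI)
    fix a b assume a: "a \<in> {..<?L}" and b: "b \<in> {..<?L}" and e: "?sc a = ?sc b"
    have "a + 1 < ?L \<or> a + 1 = ?L" "b + 1 < ?L \<or> b + 1 = ?L" using a b by auto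
    then show "a = b" using e by auto
  qed
  have PQ: "card (P - Q) \<le> 1"
  proof -
    have "finite (P - Q)" using finP by auto
    moreover have "\<forall>a\<in>P - Q. \<forall>b\<in>P - Q. a = b"
    proof (intro ballI)
      fix a b assume a: "a \<in> P - Q" and b: "b \<in> P - Q"
      have "?col a = i"
        using a sc_ne[of a] unfolding P_def Q_def
        using d sc_lt[of a] mono by (auto simp: nth_eq_iff_index_eq)
      moreover have "?col b = i"
        using b sc_ne[of b] unfolding P_def Q_def
        using d sc_lt[of b] mono by (auto simp: nth_eq_iff_index_eq)
      ultimately show "a = b" using inj a b unfolding P_def inj_on_def by auto
    qed
    ultimately show ?thesis using card_le_Suc0_iff_eq by (metis One_nat_def)
  qed
  have "card P \<le> card Q + card (P - Q)"
  proof -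
    have QP: "Q \<subseteq> P" unfolding Q_def by auto
    then have "finite Q" using finP finite_subset by blast
    then have "card (P - Q) = card P - card Q" using QP card_Diff_subset by blast
    then show ?thesis by linarith
  qed
  then have cQ: "k - 1 \<le> card Q" using PQ cP by linarith
  have "?sc ` Q \<subseteq> {..<?L} - P" using sc_lt unfolding Q_def by auto
  moreover have "card (?sc ` Q) = card Q"
    using sc_inj unfolding Q_def P_def by (intro card_image) (auto intro: inj_on_subset)
  moreover have "P \<subseteq> {..<?L}" unfolding P_def by auto
  ultimately have "card Q \<le> ?L - k"
  proof -
    have "card ({..<?L} - P) = ?L - k" using cP \<open>P \<subseteq> {..<?L}\<close>
      by (simp add: card_Diff_subset finP)
    then show ?thesis using \<open>?sc ` Q \<subseteq> {..<?L} - P\<close> \<open>card (?sc ` Q) = card Q\<close>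
      by (metis card_mono finite_Diff finite_lessThan)
  qed
  then show ?thesis using cQ cP
  proof -
    have "card P \<le> card {..<?L}" using \<open>P \<subseteq> {..<?L}\<close> by (intro card_mono) auto
    then have "k \<le> ?L" using cP by simp
    then show ?thesis using \<open>card Q \<le> ?L - k\<close> cQ by linarith
  qed
qed

lemma lower_b:
  assumes k: "2 \<le> k"
  shows "\<exists>R. \<forall>n\<ge>R. \<forall>m c. edge_colouring n m c \<and> k_rainbow_cyclic n k c \<longrightarrow> 2 * k - 1 \<le> m"
proof -
  obtain R :: nat where R: "partn_lst {..<R} (replicate (2 * k - 2) k) 2"
    using ramsey_full[of "replicate (2 * k - 2) k" 2] by blast
  show ?thesis
  proof (intro exI allI impI)
    fix n m c assume n: "R \<le> n" and a: "edge_colouring n m c \<and> k_rainbow_cyclic n k c"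
    then have ec: "edge_colouring n m c" and kr: "k_rainbow_cyclic n k c" by auto
    have P: "partn_lst {..<n} (replicate (2 * k - 2) k) 2"
      using partn_lst_greater_resource[OF R n] .
    show "2 * k - 1 \<le> m"
    proof (rule ccontr)
      assume "\<not> 2 * k - 1 \<le> m"
      then have m: "m \<le> 2 * k - 2" by linarith
      define f where "f X = c (Min X) (Max X)" for X :: "nat set"
      have "f \<in> nsets {..<n} 2 \<rightarrow> {..<length (replicate (2 * k - 2) k)}"
      proof
        fix X assume "X \<in> nsets {..<n} 2"
        then obtain u v where X: "X = {u, v}" "u \<in> {..<n}" "v \<in> {..<n}" "u \<noteq> v"
          by (rule nsets2_E)
        have "c (Min X) (Max X) < m"
          using ec X unfolding edge_colouring_def
          by (cases "u < v") (auto simp: min_def max_def)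
        then show "f X \<in> {..<length (replicate (2 * k - 2) k)}" using m f_def by auto
      qed
      then obtain i where i: "i < 2 * k - 2"
        and mono: "monochromatic {..<n} k 2 f i"
        using P unfolding partn_lst_def by auto
      then obtain H where H: "H \<in> nsets {..<n} k" and fH: "f ` nsets H 2 \<subseteq> {i}"
        unfolding monochromatic_def by auto
      have Hs: "H \<subseteq> {..<n}" "card H = k" using H by (auto simp: nsets_def)
      then obtain vs where vs: "rainbow_cycle n c vs" "H \<subseteq> set vs"
        using kr unfolding k_rainbow_cyclic_def by blast
      have "\<forall>u\<in>H. \<forall>v\<in>H. u \<noteq> v \<longrightarrow> c u v = i"
      proof (intro ballI impI)
        fix u v assume u: "u \<in> H" and v: "v \<in> H" and uv: "u \<noteq> v"
        have "{u, v} \<in> nsets H 2" using u v uv by simp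
        then have "f {u, v} = i" using fH by (meson image_subset_iff singletonD)
        moreover have "c u v = c v u" using ec uv u v Hs unfolding edge_colouring_def by auto
        ultimately show "c u v = i" unfolding f_def
          by (cases "u < v") (auto simp: min_def max_def)
      qed
      then have "2 * k - 1 \<le> length vs" using mono_cycle_long[OF vs(1) vs(2) Hs(2)] by blast
      moreover have "length vs \<le> m" using rainbow_len_le[OF vs(1) ec] .
      ultimately show False using m k by linarith
    qed
  qed
qed

definition col3 :: "nat \<Rightarrow> nat \<Rightarrow> nat" where
  "col3 u v = (let a = min u v; b = max u v in
     if a mod 3 = 0 then b mod 3 else if b mod 3 = 0 then 3 - a mod 3 else 0)"

lemma col3_ec: "edge_colouring n 3 col3"
  unfolding edge_colouring_def col3_def Let_def by (auto simp: min.commute max.commute)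

lemma col3_lt: "a < b \<Longrightarrow> col3 a b = (if a mod 3 = 0 then b mod 3 else if b mod 3 = 0 then 3 - a mod 3 else 0)"
  unfolding col3_def Let_def by (simp add: min_def max_def)

lemma col3_gt: "b < a \<Longrightarrow> col3 a b = (if b mod 3 = 0 then a mod 3 else if a mod 3 = 0 then 3 - b mod 3 else 0)"
  unfolding col3_def Let_def by (simp add: min_def max_def)

lemma rainbow3:
  assumes "a < n" "b < n" "d < n" "a \<noteq> b" "a \<noteq> d" "b \<noteq> d"
    "c a b \<noteq> c b d" "c a b \<noteq> c d a" "c b d \<noteq> c d a"
  shows "rainbow_cycle n c [a, b, d]"
proof -
  have e: "{..<length [a, b, d]} = {0, 1, 2}" by auto
  have "inj_on (\<lambda>i. c ([a, b, d] ! i) ([a, b, d] ! ((i + 1) mod length [a, b, d]))) {0, 1, 2}"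
    using assms by (simp add: inj_on_def)
  then show ?thesis using assms unfolding rainbow_cycle_def e by simp
qed

lemma witness3:
  assumes "u < v" "v < n" "3 \<le> n"
  shows "\<exists>w<n. w \<noteq> u \<and> w \<noteq> v \<and> col3 u v \<noteq> col3 v w \<and> col3 u v \<noteq> col3 w u \<and> col3 v w \<noteq> col3 w u"
proof -
  have hu: "u mod 3 = 0 \<or> u mod 3 = 1 \<or> u mod 3 = 2" by presburger
  have hv: "v mod 3 = 0 \<or> v mod 3 = 1 \<or> v mod 3 = 2" by presburger
  consider "u mod 3 = 0" "v mod 3 = 0" | "u mod 3 = 0" "v mod 3 = 1" | "u mod 3 = 0" "v mod 3 = 2"
    | "u mod 3 = 1" "v mod 3 = 0" | "u mod 3 = 1" "v mod 3 = 1" | "u mod 3 = 1" "v mod 3 = 2"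
    | "u mod 3 = 2" "v mod 3 = 0" | "u mod 3 = 2" "v mod 3 = 1" | "u mod 3 = 2" "v mod 3 = 2"
    using hu hv by (elim disjE) simp_all
  then show ?thesis
  proof cases
    case 1
    then have "u + 1 < v" using assms by presburger
    moreover have "(u + 1) mod 3 = 1" using 1 by presburger
    ultimately show ?thesis using 1 assms
      by (intro exI[of _ "u + 1"]) (simp add: col3_lt col3_gt)
  next
    case 2
    show ?thesis
    proof (cases "u = 0")
      case True
      then have "v = 1 \<or> 2 < v" using 2 assms by presburger
      then show ?thesis using 2 assms True
        by (intro exI[of _ 2]) (auto simp add: col3_lt col3_gt)
    next
      case False
      then have "3 \<le> u" using 2 by presburger
      then show ?thesis using 2 assms
        by (intro exI[of _ 1]) (simp add: col3_lt col3_gt)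
    qed
  next
    case 3
    then have "u + 1 < v" using assms by presburger
    moreover have "(u + 1) mod 3 = 1" using 3 by presburger
    ultimately show ?thesis using 3 assms
      by (intro exI[of _ "u + 1"]) (simp add: col3_lt col3_gt)
  next
    case 4
    then show ?thesis using assms
      by (intro exI[of _ 0]) (simp add: col3_lt col3_gt)
  next
    case 5
    then have "u + 2 < v" using assms by presburger
    moreover have "(u + 2) mod 3 = 0" using 5 by presburger
    ultimately show ?thesis using 5 assms
      by (intro exI[of _ "u + 2"]) (simp add: col3_lt col3_gt)
  next
    case 6
    then show ?thesis using assms
      by (intro exI[of _ 0]) (simp add: col3_lt col3_gt)
  next
    case 7
    then show ?thesis using assms
      by (intro exI[of _ 0]) (simp add: col3_lt col3_gt)
  next
    case 8
    then show ?thesis using assms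
      by (intro exI[of _ 0]) (simp add: col3_lt col3_gt)
  next
    case 9
    then have "u + 1 < v" using assms by presburger
    moreover have "(u + 1) mod 3 = 0" using 9 by presburger
    ultimately show ?thesis using 9 assms
      by (intro exI[of _ "u + 1"]) (simp add: col3_lt col3_gt)
  qed
qed

lemma col3_2cyclic:
  assumes "3 \<le> n" shows "k_rainbow_cyclic n 2 col3"
  unfolding k_rainbow_cyclic_def
proof (intro allI impI)
  fix S assume S: "S \<subseteq> {..<n} \<and> card S = 2"
  then obtain a b where ab: "S = {a, b}" "a \<noteq> b" by (meson card_2_iff)
  define u where "u = min a b"
  define v where "v = max a b"
  have uv: "u < v" "v < n" "S = {u, v}" using ab S unfolding u_def v_def
    by (auto simp: min_def max_def)
  obtain w where w: "w < n" "w \<noteq> u" "w \<noteq> v" "col3 u v \<noteq> col3 v w" "col3 u v \<noteq> col3 w u"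
    "col3 v w \<noteq> col3 w u" using witness3[OF uv(1) uv(2) assms] by blast
  have "rainbow_cycle n col3 [u, v, w]"
    using w uv by (intro rainbow3) auto
  then show "\<exists>vs. rainbow_cycle n col3 vs \<and> S \<subseteq> set vs" using uv(3) by auto
qed

lemma cyclic_2_1:
  assumes "2 \<le> n" "k_rainbow_cyclic n 2 c" shows "k_rainbow_cyclic n 1 c"
  unfolding k_rainbow_cyclic_def
proof (intro allI impI)
  fix S assume S: "S \<subseteq> {..<n} \<and> card S = 1"
  then obtain a where a: "S = {a}" by (meson card_1_singletonE)
  define b :: nat where "b = (if a = 0 then 1 else 0)"
  have "{a, b} \<subseteq> {..<n} \<and> card {a, b} = 2" using a S assms(1) unfolding b_def by auto
  then obtain vs where "rainbow_cycle n c vs" "{a, b} \<subseteq> set vs"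
    using assms(2) unfolding k_rainbow_cyclic_def by blast
  then show "\<exists>vs. rainbow_cycle n c vs \<and> S \<subseteq> set vs" using a by auto
qed

lemma crx_small:
  assumes n: "3 \<le> n" and k: "k = 1 \<or> k = 2"
  shows "crx k n = 3"
  unfolding crx_def
proof (rule Least_equality)
  have "k_rainbow_cyclic n k col3" using k col3_2cyclic[OF n] cyclic_2_1[of n col3] n by auto
  then show "\<exists>c. edge_colouring n 3 c \<and> k_rainbow_cyclic n k c" using col3_ec by blast
next
  fix m assume "\<exists>c. edge_colouring n m c \<and> k_rainbow_cyclic n k c"
  then obtain c where c: "edge_colouring n m c" "k_rainbow_cyclic n k c" by blast
  have "{..<k} \<subseteq> {..<n} \<and> card {..<k} = k" using k n by auto
  then obtain vs where "rainbow_cycle n c vs" using c(2) unfolding k_rainbow_cyclic_def by blast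
  moreover from this have "3 \<le> length vs" by (simp add: rainbow_cycle_def)
  ultimately show "3 \<le> m" using rainbow_len_le[OF _ c(1)] by fastforce
qed

lemma card_blocks:
  fixes E :: "'e set" and D :: "'d set" and A :: "nat \<Rightarrow> 'e set"
    and Q :: "nat \<Rightarrow> ('e \<Rightarrow> 'd) \<Rightarrow> bool" and \<rho> :: real
  assumes "finite E" "finite D" "\<rho> \<ge> 0"
    and "\<forall>l<T. A l \<subseteq> E" and "\<forall>l<T. \<forall>l'<T. l \<noteq> l' \<longrightarrow> A l \<inter> A l' = {}"
    and "\<forall>l<T. real (card {h \<in> PiE (A l) (\<lambda>_. D). Q l h}) \<le> \<rho> * real (card D) ^ card (A l)"
  shows "real (card {f \<in> PiE E (\<lambda>_. D). \<forall>l<T. Q l (restrict f (A l))})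
           \<le> \<rho> ^ T * real (card D) ^ card E"
  using assms
proof (induction T arbitrary: E)
  case 0
  then show ?case by (simp add: card_PiE)
next
  case (Suc T)
  let ?E' = "E - A T"
  have finE': "finite ?E'" using Suc.prems by auto
  have sub': "\<forall>l<T. A l \<subseteq> ?E'"
  proof (intro allI impI)
    fix l assume l: "l < T"
    have "A l \<subseteq> E" using Suc.prems(4) l by auto
    moreover have "A l \<inter> A T = {}" using Suc.prems(5) l by auto
    ultimately show "A l \<subseteq> ?E'" by auto
  qed
  let ?X = "{g \<in> PiE ?E' (\<lambda>_. D). \<forall>l<T. Q l (restrict g (A l))}"
  let ?Y = "{h \<in> PiE (A T) (\<lambda>_. D). Q T h}"
  let ?S = "{f \<in> PiE E (\<lambda>_. D). \<forall>l<Suc T. Q l (restrict f (A l))}"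
  have IH: "real (card ?X) \<le> \<rho> ^ T * real (card D) ^ card ?E'"
  proof -
    have d': "\<forall>l<T. \<forall>l'<T. l \<noteq> l' \<longrightarrow> A l \<inter> A l' = {}" using Suc.prems(5) by auto
    have b': "\<forall>l<T. real (card {h \<in> PiE (A l) (\<lambda>_. D). Q l h}) \<le> \<rho> * real (card D) ^ card (A l)"
      using Suc.prems(6) by auto
    show ?thesis by (rule Suc.IH[OF finE' Suc.prems(2,3) sub' d' b'])
  qed
  have Y: "real (card ?Y) \<le> \<rho> * real (card D) ^ card (A T)" using Suc.prems(6) by auto
  define \<phi> where "\<phi> f = (restrict f ?E', restrict f (A T))" for f :: "'e \<Rightarrow> 'd"
  have inj: "inj_on \<phi> ?S"
  proof (rule inj_onI)
    fix f g assume f: "f \<in> ?S" and g: "g \<in> ?S" and e: "\<phi> f = \<phi> g"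
    show "f = g"
    proof
      fix x
      show "f x = g x"
      proof (cases "x \<in> E")
        case True
        then show ?thesis
        proof (cases "x \<in> A T")
          case True
          then show ?thesis using e unfolding \<phi>_def by (metis prod.inject restrict_apply')
        next
          case False
          then have "x \<in> ?E'" using \<open>x \<in> E\<close> by auto
          then show ?thesis using e unfolding \<phi>_def by (metis prod.inject restrict_apply')
        qed
      next
        case False
        then show ?thesis using f g by (auto simp: PiE_def extensional_def)
      qed
    qed
  qed
  have img: "\<phi> ` ?S \<subseteq> ?X \<times> ?Y"
  proof
    fix p assume "p \<in> \<phi> ` ?S"
    then obtain f where f: "f \<in> ?S" "p = \<phi> f" by auto
    have "restrict f ?E' \<in> ?X"
    proof -
      have "restrict f ?E' \<in> PiE ?E' (\<lambda>_. D)" using f(1) by auto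
      moreover have "\<forall>l<T. Q l (restrict (restrict f ?E') (A l))"
      proof (intro allI impI)
        fix l assume l: "l < T"
        then have "?E' \<inter> A l = A l" using sub' by auto
        then show "Q l (restrict (restrict f ?E') (A l))" using f(1) l by auto
      qed
      ultimately show ?thesis by auto
    qed
    moreover have "restrict f (A T) \<in> ?Y" using f(1) Suc.prems(4) by auto
    ultimately show "p \<in> ?X \<times> ?Y" using f(2) unfolding \<phi>_def by auto
  qed
  have "finite (PiE ?E' (\<lambda>_. D))" using finE' Suc.prems(2) by (simp add: finite_PiE)
  then have finX: "finite ?X" by (rule finite_subset[rotated]) auto
  have "finite (A T)" using Suc.prems(1,4) finite_subset[of "A T" E] by auto
  then have "finite (PiE (A T) (\<lambda>_. D))" using Suc.prems(2) by (simp add: finite_PiE)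
  then have finY: "finite ?Y" by (rule finite_subset[rotated]) auto
  have finXY: "finite (?X \<times> ?Y)" using finX finY by auto
  have "card ?S \<le> card (?X \<times> ?Y)"
    using card_inj_on_le[OF inj img finXY] .
  then have "card ?S \<le> card ?X * card ?Y" by (simp add: card_cartesian_product)
  then have "real (card ?S) \<le> real (card ?X) * real (card ?Y)" by (simp only: of_nat_mult[symmetric] of_nat_le_iff)
  also have "\<dots> \<le> (\<rho> ^ T * real (card D) ^ card ?E') * (\<rho> * real (card D) ^ card (A T))"
    by (rule mult_mono[OF IH Y]) (use Suc.prems(3) in auto)
  also have "\<dots> = \<rho> ^ Suc T * real (card D) ^ (card ?E' + card (A T))"
    by (simp add: power_add)
  also have "card ?E' + card (A T) = card E"
  proof -
    have "A T \<subseteq> E" using Suc.prems(4) by auto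
    have fA: "finite (A T)" using \<open>A T \<subseteq> E\<close> Suc.prems(1) finite_subset by blast
    have "card ?E' = card E - card (A T)" using card_Diff_subset[OF fA \<open>A T \<subseteq> E\<close>] .
    moreover have "card (A T) \<le> card E" using card_mono[OF Suc.prems(1) \<open>A T \<subseteq> E\<close>] .
    ultimately show ?thesis by linarith
  qed
  finally show ?case .
qed

lemma asymp_small:
  fixes \<rho> \<epsilon> :: real and K :: nat
  assumes "0 \<le> \<rho>" "\<rho> < 1" "0 < K" "0 < \<epsilon>"
  shows "\<exists>T0. \<forall>T\<ge>T0. (real T + 2) ^ K * \<rho> ^ T < \<epsilon>"
proof -
  define \<sigma> where "\<sigma> = root K \<rho>"
  have s0: "0 \<le> \<sigma>" using assms unfolding \<sigma>_def by simp
  have s1: "\<sigma> < 1" using assms unfolding \<sigma>_def by (metis real_root_less_iff real_root_one)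
  have sK: "\<sigma> ^ K = \<rho>" using assms unfolding \<sigma>_def by (simp add: real_root_pow_pos2)
  have "(\<lambda>T. of_nat T * \<sigma> ^ T) \<longlonglongrightarrow> 0" using s0 s1 by (intro powser_times_n_limit_0) simp
  moreover have "(\<lambda>T. 2 * \<sigma> ^ T) \<longlonglongrightarrow> 0" using s0 s1
    by (intro tendsto_mult_right_zero LIMSEQ_power_zero) simp
  ultimately have "(\<lambda>T. of_nat T * \<sigma> ^ T + 2 * \<sigma> ^ T) \<longlonglongrightarrow> 0 + 0" by (rule tendsto_add)
  then have "(\<lambda>T. (real T + 2) * \<sigma> ^ T) \<longlonglongrightarrow> 0" by (simp add: algebra_simps)
  then have "(\<lambda>T. ((real T + 2) * \<sigma> ^ T) ^ K) \<longlonglongrightarrow> 0 ^ K" by (rule tendsto_power)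
  moreover have "((real T + 2) * \<sigma> ^ T) ^ K = (real T + 2) ^ K * \<rho> ^ T" for T
    by (simp add: power_mult_distrib sK flip: power_mult) (simp add: mult.commute power_mult sK)
  ultimately have "(\<lambda>T. (real T + 2) ^ K * \<rho> ^ T) \<longlonglongrightarrow> 0" using assms(3) by (simp add: zero_power)
  then have "eventually (\<lambda>T. (real T + 2) ^ K * \<rho> ^ T < \<epsilon>) sequentially"
    using assms(4) by (rule order_tendstoD(2))
  then show ?thesis by (simp add: eventually_sequentially)
qed

definition sS :: "nat set \<Rightarrow> nat \<Rightarrow> nat" where
  "sS S i = sorted_list_of_set S ! i"

definition xS :: "nat \<Rightarrow> nat \<Rightarrow> nat set \<Rightarrow> nat \<Rightarrow> nat \<Rightarrow> nat" where
  "xS n k S l i = sorted_list_of_set ({..<n} - S) ! (l * (k - 1) + i)"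

definition cyc :: "nat \<Rightarrow> nat \<Rightarrow> nat set \<Rightarrow> nat \<Rightarrow> nat list" where
  "cyc n k S l = map (\<lambda>j. if even j then sS S (j div 2) else xS n k S l (j div 2)) [0..<2 * k - 1]"

definition edg :: "nat \<Rightarrow> nat \<Rightarrow> nat set \<Rightarrow> nat \<Rightarrow> nat \<Rightarrow> nat set" where
  "edg n k S l j = (if even j then {sS S (j div 2), xS n k S l (j div 2)}
                    else {xS n k S l (j div 2), sS S (Suc (j div 2))})"

locale kset =
  fixes n k :: nat and S :: "nat set"
  assumes k2: "2 \<le> k" and Sn: "S \<subseteq> {..<n}" and cS: "card S = k"
begin

lemma finS: "finite S" using Sn finite_subset by blast

lemma kn: "k \<le> n"
  using card_mono[OF _ Sn] cS by simp

lemma s_in: "i < k \<Longrightarrow> sS S i \<in> S"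
  unfolding sS_def using finS cS by (metis length_sorted_list_of_set nth_mem set_sorted_list_of_set)

lemma s_inj: "i < k \<Longrightarrow> j < k \<Longrightarrow> sS S i = sS S j \<Longrightarrow> i = j"
  unfolding sS_def using finS cS
  by (metis distinct_sorted_list_of_set length_sorted_list_of_set nth_eq_iff_index_eq)

lemma s_onto: "a \<in> S \<Longrightarrow> \<exists>i<k. sS S i = a"
  unfolding sS_def using finS cS
  by (metis in_set_conv_nth length_sorted_list_of_set set_sorted_list_of_set)

lemma s_lt: "i < k \<Longrightarrow> sS S i < n" using s_in Sn by auto

definition T where "T = (n - k) div (k - 1)"

lemma lenR: "length (sorted_list_of_set ({..<n} - S)) = n - k"
  using finS Sn cS by (simp add: card_Diff_subset)

lemma idx_lt: "l < T \<Longrightarrow> i < k - 1 \<Longrightarrow> l * (k - 1) + i < n - k"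
proof -
  assume l: "l < T" and i: "i < k - 1"
  have "l * (k - 1) + i < (l + 1) * (k - 1)" using i by simp
  also have "\<dots> \<le> T * (k - 1)" using l by (intro mult_right_mono) auto
  also have "\<dots> \<le> n - k" unfolding T_def by (rule div_times_less_eq_dividend)
  finally show ?thesis .
qed

lemma x_notin: "l < T \<Longrightarrow> i < k - 1 \<Longrightarrow> xS n k S l i \<in> {..<n} - S"
  unfolding xS_def using idx_lt lenR
  by (metis finite_Diff finite_lessThan nth_mem set_sorted_list_of_set)

lemma x_inj:
  assumes "l < T" "i < k - 1" "l' < T" "i' < k - 1" "xS n k S l i = xS n k S l' i'"
  shows "l = l' \<and> i = i'"
proof -
  have "l * (k - 1) + i = l' * (k - 1) + i'"
    using assms idx_lt lenR unfolding xS_def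
    by (metis distinct_sorted_list_of_set nth_eq_iff_index_eq)
  moreover have "(l * (k - 1) + i) div (k - 1) = l" using assms(2) by simp
  moreover have "(l' * (k - 1) + i') div (k - 1) = l'" using assms(4) by simp
  ultimately have "l = l'" by metis
  then show ?thesis using \<open>l * (k - 1) + i = l' * (k - 1) + i'\<close> by simp
qed

lemma pair_split:
  assumes "{a, b} = {a', b'}" "a \<in> S" "a' \<in> S" "b \<notin> S" "b' \<notin> S"
  shows "a = a' \<and> b = b'"
  using assms by (auto simp: doubleton_eq_iff)

lemma jdiv: "j < 2 * k - 2 \<Longrightarrow> j div 2 < k - 1" by auto

lemma edg_sub: "l < T \<Longrightarrow> j < 2 * k - 2 \<Longrightarrow> edg n k S l j \<in> nsets {..<n} 2"
proof -
  assume l: "l < T" and j: "j < 2 * k - 2"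
  have x: "xS n k S l (j div 2) \<in> {..<n} - S" using x_notin[OF l jdiv[OF j]] .
  have "j div 2 < k" "Suc (j div 2) < k" using j by auto
  then have "sS S (j div 2) \<in> S" "sS S (Suc (j div 2)) \<in> S" using s_in by auto
  then show ?thesis using x Sn unfolding edg_def by auto
qed

lemma edg_disj:
  assumes "l < T" "l' < T" "j < 2 * k - 2" "j' < 2 * k - 2" "edg n k S l j = edg n k S l' j'"
  shows "l = l'"
proof -
  have j1: "j div 2 < k" "Suc (j div 2) < k" "j' div 2 < k" "Suc (j' div 2) < k" using assms(3,4) by auto
  have "(if even j then sS S (j div 2) else sS S (Suc (j div 2))) \<in> S"
       "(if even j' then sS S (j' div 2) else sS S (Suc (j' div 2))) \<in> S"
    using s_in j1 by auto
  moreover have "xS n k S l (j div 2) \<notin> S" "xS n k S l' (j' div 2) \<notin> S"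
    using x_notin assms jdiv by auto
  ultimately have "xS n k S l (j div 2) = xS n k S l' (j' div 2)"
    using pair_split assms(5) unfolding edg_def
    by (smt (verit, best) insert_commute)
  then show ?thesis using x_inj assms jdiv by blast
qed

lemma edg_inj:
  assumes "l < T" "j < 2 * k - 2" "j' < 2 * k - 2" "edg n k S l j = edg n k S l j'"
  shows "j = j'"
proof -
  have j1: "j div 2 < k" "Suc (j div 2) < k" "j' div 2 < k" "Suc (j' div 2) < k" using assms(2,3) by auto
  define a where "a = (if even j then sS S (j div 2) else sS S (Suc (j div 2)))"
  define a' where "a' = (if even j' then sS S (j' div 2) else sS S (Suc (j' div 2)))"
  have "a \<in> S" "a' \<in> S" using s_in j1 unfolding a_def a'_def by auto
  moreover have "xS n k S l (j div 2) \<notin> S" "xS n k S l (j' div 2) \<notin> S"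
    using x_notin assms jdiv by auto
  moreover have "edg n k S l j = {a, xS n k S l (j div 2)}" "edg n k S l j' = {a', xS n k S l (j' div 2)}"
    unfolding edg_def a_def a'_def by auto
  ultimately have e: "a = a'" "xS n k S l (j div 2) = xS n k S l (j' div 2)"
    using pair_split assms(4) by metis+
  then have d: "j div 2 = j' div 2" using x_inj assms jdiv by blast
  show ?thesis
  proof (cases "even j = even j'")
    case True
    then show ?thesis using d by (metis div_mult_mod_eq odd_iff_mod_2_eq_one even_iff_mod_2_eq_zero)
  next
    case False
    then have "sS S (j div 2) = sS S (Suc (j div 2))" using e(1) d unfolding a_def a'_def
      by (cases "even j") auto
    then show ?thesis using s_inj j1 by fastforce
  qed
qed

lemma cyc_len: "length (cyc n k S l) = 2 * k - 1"
  unfolding cyc_def by simp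

lemma cyc_nth: "j < 2 * k - 1 \<Longrightarrow> cyc n k S l ! j = (if even j then sS S (j div 2) else xS n k S l (j div 2))"
  unfolding cyc_def by simp

lemma cyc_edge: "j < 2 * k - 2 \<Longrightarrow> {cyc n k S l ! j, cyc n k S l ! Suc j} = edg n k S l j"
proof -
  assume j: "j < 2 * k - 2"
  then have "j < 2 * k - 1" "Suc j < 2 * k - 1" by auto
  then show ?thesis unfolding edg_def using cyc_nth by auto
qed

lemma cyc_rainbow:
  assumes l: "l < T" and inj: "inj_on (\<lambda>j. f (edg n k S l j)) {..<2 * k - 2}"
    and ne: "\<forall>j<2 * k - 2. f (edg n k S l j) \<noteq> f {sS S 0, sS S (k - 1)}"
  shows "rainbow_cycle n (\<lambda>u v. f {u, v}) (cyc n k S l) \<and> S \<subseteq> set (cyc n k S l)"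
proof -
  let ?c = "cyc n k S l"
  let ?L = "2 * k - 1"
  have el: "?c ! j \<in> S \<longleftrightarrow> even j" "?c ! j < n" if "j < ?L" for j
  proof -
    show "?c ! j \<in> S \<longleftrightarrow> even j"
    proof (cases "even j")
      case True
      then have "j div 2 < k" using that by auto
      then show ?thesis using True cyc_nth[OF that] s_in by auto
    next
      case False
      then have "j div 2 < k - 1" using that by presburger
      then show ?thesis using False cyc_nth[OF that] x_notin[OF l] by auto
    qed
    show "?c ! j < n"
    proof (cases "even j")
      case True
      then have "j div 2 < k" using that by auto
      then show ?thesis using True cyc_nth[OF that] s_lt by auto
    next
      case False
      then have "j div 2 < k - 1" using that by presburger
      then show ?thesis using False cyc_nth[OF that] x_notin[OF l] by auto
    qed
  qed
  have dist: "distinct ?c"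
  proof (rule distinct_conv_nth[THEN iffD2], intro allI impI)
    fix i j assume i: "i < length ?c" and j: "j < length ?c" and ij: "i \<noteq> j"
    have i': "i < ?L" and j': "j < ?L" using i j cyc_len by auto
    show "?c ! i \<noteq> ?c ! j"
    proof (cases "even i = even j")
      case False
      then show ?thesis using el(1)[OF i'] el(1)[OF j'] by auto
    next
      case True
      have d: "i div 2 \<noteq> j div 2" using True ij
        by (metis div_mult_mod_eq odd_iff_mod_2_eq_one even_iff_mod_2_eq_zero)
      show ?thesis
      proof (cases "even i")
        case True
        then have "i div 2 < k" "j div 2 < k" using i' j' by auto
        then show ?thesis using True \<open>even i = even j\<close> cyc_nth[OF i'] cyc_nth[OF j'] s_inj d by auto
      next
        case False
        then have "i div 2 < k - 1" "j div 2 < k - 1" using i' j' \<open>even i = even j\<close> by presburger+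
        then show ?thesis using False \<open>even i = even j\<close> cyc_nth[OF i'] cyc_nth[OF j'] x_inj[OF l _ l] d
          by auto
      qed
    qed
  qed
  have sub: "set ?c \<subseteq> {..<n}"
  proof
    fix y assume "y \<in> set ?c"
    then obtain j where "j < length ?c" "y = ?c ! j" by (auto simp: in_set_conv_nth)
    then show "y \<in> {..<n}" using el(2) cyc_len by auto
  qed
  let ?col = "\<lambda>j. f {?c ! j, ?c ! ((j + 1) mod length ?c)}"
  have col1: "?col j = f (edg n k S l j)" if "j < 2 * k - 2" for j
  proof -
    have "(j + 1) mod length ?c = Suc j" using that cyc_len by simp
    then show ?thesis using cyc_edge[OF that] by simp
  qed
  have col2: "?col (2 * k - 2) = f {sS S 0, sS S (k - 1)}"
  proof -
    have "2 * k - 2 + 1 = length ?c" using cyc_len k2 by simp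
    then have "(2 * k - 2 + 1) mod length ?c = 0" by simp
    moreover have "?c ! (2 * k - 2) = sS S (k - 1)"
    proof -
      have "(2 * k - 2) div 2 = k - 1" "even (2 * k - 2)" "2 * k - 2 < 2 * k - 1" using k2 by auto
      then show ?thesis using cyc_nth[of "2 * k - 2"] by simp
    qed
    moreover have "?c ! 0 = sS S 0" using cyc_nth[of 0] k2 by simp
    ultimately show ?thesis by (simp add: insert_commute)
  qed
  have injc: "inj_on ?col {..<length ?c}"
  proof (rule inj_onI)
    fix i j assume i: "i \<in> {..<length ?c}" and j: "j \<in> {..<length ?c}" and e: "?col i = ?col j"
    have i': "i < 2 * k - 2 \<or> i = 2 * k - 2" and j': "j < 2 * k - 2 \<or> j = 2 * k - 2"
      using i j cyc_len by auto
    show "i = j"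
    proof (cases "i < 2 * k - 2")
      case True
      note iT = this
      show ?thesis
      proof (cases "j < 2 * k - 2")
        case True
        then show ?thesis using iT e col1 inj unfolding inj_on_def by auto
      next
        case False
        then have "j = 2 * k - 2" using j' by auto
        then show ?thesis using e col1[OF iT] col2 ne iT by auto
      qed
    next
      case False
      then have iE: "i = 2 * k - 2" using i' by auto
      show ?thesis
      proof (cases "j < 2 * k - 2")
        case True
        then show ?thesis using e col1[OF True] col2 ne iE by auto
      next
        case False
        then show ?thesis using j' iE by auto
      qed
    qed
  qed
  have "3 \<le> length ?c" using cyc_len k2 by simp
  then have rc: "rainbow_cycle n (\<lambda>u v. f {u, v}) ?c"
    unfolding rainbow_cycle_def using dist sub injc by simp
  have "S \<subseteq> set ?c"
  proof
    fix a assume "a \<in> S"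
    then obtain i where i: "i < k" "sS S i = a" using s_onto by blast
    then have "2 * i < ?L" by simp
    then have "?c ! (2 * i) = a" using cyc_nth i by simp
    moreover have "2 * i < length ?c" using \<open>2 * i < ?L\<close> cyc_len by simp
    ultimately show "a \<in> set ?c" by (metis nth_mem)
  qed
  then show ?thesis using rc by simp
qed

end

definition rho :: "nat \<Rightarrow> real" where
  "rho k = 1 - 1 / real (2 * k - 1) ^ (2 * k - 2)"

definition BadS :: "nat \<Rightarrow> nat \<Rightarrow> nat set \<Rightarrow> nat \<Rightarrow> (nat set \<Rightarrow> nat) set" where
  "BadS n k S \<alpha> = {f \<in> PiE (nsets {..<n} 2) (\<lambda>_. {..<2 * k - 1}).
      \<forall>l<(n - k) div (k - 1). \<not> (inj_on (\<lambda>j. f (edg n k S l j)) {..<2 * k - 2}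
                       \<and> (\<forall>j<2 * k - 2. f (edg n k S l j) \<noteq> \<alpha>))}"

context kset
begin

definition Ab where "Ab l = edg n k S l ` {..<2 * k - 2}"

definition Qb where "Qb \<alpha> l h = (\<not> (inj_on (\<lambda>j. h (edg n k S l j)) {..<2 * k - 2}
                       \<and> (\<forall>j<2 * k - 2. h (edg n k S l j) \<noteq> \<alpha>)))"

lemma block_bound:
  assumes l: "l < T" and \<alpha>: "\<alpha> < 2 * k - 1"
  shows "real (card {h \<in> PiE (Ab l) (\<lambda>_. {..<2 * k - 1}). Qb \<alpha> l h})
         \<le> (1 - 1 / real (2 * k - 1) ^ (2 * k - 2)) * real (card {..<2 * k - 1}) ^ card (Ab l)"
proof -
  let ?m = "2 * k - 1"
  let ?D = "{..<?m}"
  let ?e = "edg n k S l"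
  define sh where "sh j = (if j < \<alpha> then j else Suc j)" for j :: nat
  have injE: "inj_on ?e {..<2 * k - 2}" using edg_inj[OF l] by (auto intro: inj_onI)
  define h0 where "h0 = restrict (\<lambda>e. sh (the_inv_into {..<2 * k - 2} ?e e)) (Ab l)"
  have h0e: "h0 (?e j) = sh j" if "j < 2 * k - 2" for j
    using that injE unfolding h0_def Ab_def by (auto simp: the_inv_into_f_f)
  have shm: "sh j < ?m" if "j < 2 * k - 2" for j using that unfolding sh_def by auto
  have h0P: "h0 \<in> PiE (Ab l) (\<lambda>_. ?D)"
  proof -
    have "h0 e \<in> ?D" if "e \<in> Ab l" for e
    proof -
      obtain j where j: "j < 2 * k - 2" "e = ?e j" using \<open>e \<in> Ab l\<close> unfolding Ab_def by auto
      then show ?thesis using h0e shm by auto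
    qed
    moreover have "h0 \<in> extensional (Ab l)" unfolding h0_def by simp
    ultimately show ?thesis by (auto simp: PiE_def)
  qed
  have h0Q: "\<not> Qb \<alpha> l h0"
  proof -
    have "inj_on (\<lambda>j. h0 (?e j)) {..<2 * k - 2}"
      by (rule inj_onI) (auto simp: h0e sh_def split: if_splits)
    moreover have "\<forall>j<2 * k - 2. h0 (?e j) \<noteq> \<alpha>" by (auto simp: h0e sh_def)
    ultimately show ?thesis unfolding Qb_def by simp
  qed
  have finA: "finite (Ab l)" unfolding Ab_def by simp
  have finP: "finite (PiE (Ab l) (\<lambda>_. ?D))" using finA by (simp add: finite_PiE)
  have "{h \<in> PiE (Ab l) (\<lambda>_. ?D). Qb \<alpha> l h} \<subseteq> PiE (Ab l) (\<lambda>_. ?D) - {h0}"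
    using h0Q by auto
  then have "card {h \<in> PiE (Ab l) (\<lambda>_. ?D). Qb \<alpha> l h} \<le> card (PiE (Ab l) (\<lambda>_. ?D) - {h0})"
    using finP by (intro card_mono) auto
  also have "\<dots> = ?m ^ card (Ab l) - 1" using h0P finP finA by (simp add: card_PiE)
  finally have c1: "card {h \<in> PiE (Ab l) (\<lambda>_. ?D). Qb \<alpha> l h} \<le> ?m ^ card (Ab l) - 1" .
  have m1: "1 \<le> ?m" using k2 by simp
  have "card (Ab l) \<le> 2 * k - 2" unfolding Ab_def using card_image_le[of "{..<2 * k - 2}" ?e] by simp
  then have pw: "real ?m ^ card (Ab l) \<le> real ?m ^ (2 * k - 2)"
    using m1 by (intro power_increasing) auto
  have pos: "0 < real ?m ^ (2 * k - 2)" using m1 by simp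
  have pos1: "1 \<le> ?m ^ card (Ab l)" using m1 by simp
  have "real (card {h \<in> PiE (Ab l) (\<lambda>_. ?D). Qb \<alpha> l h}) \<le> real (?m ^ card (Ab l) - 1)"
    using c1 by linarith
  also have "\<dots> = real ?m ^ card (Ab l) - 1" using pos1 by (simp add: of_nat_diff)
  also have "\<dots> \<le> (1 - 1 / real ?m ^ (2 * k - 2)) * real ?m ^ card (Ab l)"
  proof -
    have "real ?m ^ card (Ab l) / real ?m ^ (2 * k - 2) \<le> 1" using pw pos by simp
    then show ?thesis by (simp add: algebra_simps)
  qed
  finally show ?thesis by simp
qed

lemma bad_bound:
  assumes \<alpha>: "\<alpha> < 2 * k - 1"
  shows "real (card (BadS n k S \<alpha>)) \<le> rho k ^ ((n - k) div (k - 1)) * real (2 * k - 1) ^ card (nsets {..<n} 2)"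
proof -
  let ?E = "nsets {..<n} 2"
  let ?D = "{..<2 * k - 1}"
  have eq: "BadS n k S \<alpha> = {f \<in> PiE ?E (\<lambda>_. ?D). \<forall>l<T. Qb \<alpha> l (restrict f (Ab l))}"
  proof -
    have "Qb \<alpha> l (restrict f (Ab l)) = Qb \<alpha> l f" for l f
    proof -
      have "restrict f (Ab l) (edg n k S l j) = f (edg n k S l j)" if "j < 2 * k - 2" for j
        using that unfolding Ab_def by simp
      then show ?thesis unfolding Qb_def inj_on_def by auto
    qed
    then show ?thesis unfolding BadS_def Qb_def T_def by simp
  qed
  have r0: "0 \<le> rho k"
  proof -
    have "1 \<le> real (2 * k - 1) ^ (2 * k - 2)" using k2 by (intro one_le_power) auto
    then show ?thesis unfolding rho_def by (simp add: field_simps)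
  qed
  have "real (card {f \<in> PiE ?E (\<lambda>_. ?D). \<forall>l<T. Qb \<alpha> l (restrict f (Ab l))})
        \<le> rho k ^ T * real (card ?D) ^ card ?E"
  proof (rule card_blocks)
    show "finite ?E" by (simp add: finite_imp_finite_nsets)
    show "finite ?D" by simp
    show "0 \<le> rho k" using r0 .
    show "\<forall>l<T. Ab l \<subseteq> ?E" unfolding Ab_def using edg_sub by auto
    show "\<forall>l<T. \<forall>l'<T. l \<noteq> l' \<longrightarrow> Ab l \<inter> Ab l' = {}"
      unfolding Ab_def using edg_disj by blast
    show "\<forall>l<T. real (card {h \<in> PiE (Ab l) (\<lambda>_. ?D). Qb \<alpha> l h}) \<le> rho k * real (card ?D) ^ card (Ab l)"
      using block_bound \<alpha> unfolding rho_def by auto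
  qed
  then show ?thesis using eq unfolding T_def by simp
qed

lemma good_cycle:
  assumes "f \<in> PiE (nsets {..<n} 2) (\<lambda>_. {..<2 * k - 1})" "f \<notin> BadS n k S (f {sS S 0, sS S (k - 1)})"
  shows "\<exists>vs. rainbow_cycle n (\<lambda>u v. f {u, v}) vs \<and> S \<subseteq> set vs"
proof -
  obtain l where l: "l < T" and g: "inj_on (\<lambda>j. f (edg n k S l j)) {..<2 * k - 2}"
    "\<forall>j<2 * k - 2. f (edg n k S l j) \<noteq> f {sS S 0, sS S (k - 1)}"
    using assms unfolding BadS_def T_def by auto
  show ?thesis using cyc_rainbow[OF l g] by blast
qed

end


lemma upper_exists:
  assumes k: "2 \<le> k"
    and small: "real (n choose k) * real (2 * k - 1) * rho k ^ ((n - k) div (k - 1)) < 1"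
  shows "\<exists>c. edge_colouring n (2 * k - 1) c \<and> k_rainbow_cyclic n k c"
proof -
  let ?m = "2 * k - 1"
  let ?E = "nsets {..<n} 2"
  let ?D = "{..<?m}"
  let ?Ss = "{S. S \<subseteq> {..<n} \<and> card S = k}"
  let ?U = "\<Union>S\<in>?Ss. \<Union>\<alpha>\<in>?D. BadS n k S \<alpha>"
  let ?B = "rho k ^ ((n - k) div (k - 1)) * real ?m ^ card ?E"
  have finE: "finite ?E" by (simp add: finite_imp_finite_nsets)
  have finSs: "finite ?Ss" by (rule finite_subset[of _ "Pow {..<n}"]) auto
  have cSs: "card ?Ss = n choose k" using n_subsets[of "{..<n}" k] by simp
  have "card ?U \<le> (\<Sum>S\<in>?Ss. card (\<Union>\<alpha>\<in>?D. BadS n k S \<alpha>))"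
    using finSs by (rule card_UN_le)
  also have "\<dots> \<le> (\<Sum>S\<in>?Ss. \<Sum>\<alpha>\<in>?D. card (BadS n k S \<alpha>))"
    by (intro sum_mono card_UN_le) simp
  finally have "real (card ?U) \<le> real (\<Sum>S\<in>?Ss. \<Sum>\<alpha>\<in>?D. card (BadS n k S \<alpha>))"
    by linarith
  also have "\<dots> = (\<Sum>S\<in>?Ss. \<Sum>\<alpha>\<in>?D. real (card (BadS n k S \<alpha>)))" by simp
  also have "\<dots> \<le> (\<Sum>S\<in>?Ss. \<Sum>\<alpha>\<in>?D. ?B)"
  proof (intro sum_mono)
    fix S \<alpha> assume S: "S \<in> ?Ss" and \<alpha>: "\<alpha> \<in> ?D"
    interpret kset n k S using S k by unfold_locales auto
    show "real (card (BadS n k S \<alpha>)) \<le> ?B" using bad_bound \<alpha> by simp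
  qed
  also have "\<dots> = real (card ?Ss) * (real (card ?D) * ?B)" by (simp only: sum_constant)
  also have "\<dots> = real (n choose k) * real ?m * ?B" by (simp only: cSs card_lessThan mult.assoc)
  also have "\<dots> < real ?m ^ card ?E"
  proof -
    have "0 < real ?m ^ card ?E" using k by simp
    then have "(real (n choose k) * real ?m * rho k ^ ((n - k) div (k - 1))) * real ?m ^ card ?E
               < 1 * real ?m ^ card ?E"
      using small by (intro mult_strict_right_mono) auto
    then show ?thesis by (simp add: mult.assoc)
  qed
  also have "\<dots> = real (card (PiE ?E (\<lambda>_. ?D)))" using finE by (simp add: card_PiE)
  finally have lt: "card ?U < card (PiE ?E (\<lambda>_. ?D))" by linarith
  have "\<not> PiE ?E (\<lambda>_. ?D) \<subseteq> ?U"
  proof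
    assume sub: "PiE ?E (\<lambda>_. ?D) \<subseteq> ?U"
    have "?U \<subseteq> PiE ?E (\<lambda>_. ?D)" unfolding BadS_def by blast
    moreover have "finite (PiE ?E (\<lambda>_. ?D))" using finE by (simp add: finite_PiE)
    ultimately have "finite ?U" by (rule finite_subset)
    then have "card (PiE ?E (\<lambda>_. ?D)) \<le> card ?U" using sub card_mono by blast
    then show False using lt by simp
  qed
  then obtain f where f: "f \<in> PiE ?E (\<lambda>_. ?D)" "f \<notin> ?U" by blast
  define c where "c u v = f {u, v}" for u v
  have ec: "edge_colouring n ?m c"
    unfolding edge_colouring_def c_def using f(1) by (auto simp: insert_commute)
  have "k_rainbow_cyclic n k c"
    unfolding k_rainbow_cyclic_def
  proof (intro allI impI)
    fix S assume S: "S \<subseteq> {..<n} \<and> card S = k"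
    interpret kset n k S using S k by unfold_locales auto
    have "0 < k" "k - 1 < k" "0 \<noteq> k - 1" using k by auto
    then have "sS S 0 \<noteq> sS S (k - 1)" using s_inj by blast
    moreover have "sS S 0 < n" "sS S (k - 1) < n" using s_lt k by auto
    ultimately have "{sS S 0, sS S (k - 1)} \<in> ?E" by simp
    then have "f {sS S 0, sS S (k - 1)} \<in> ?D" using f(1) by auto
    then have "f \<notin> BadS n k S (f {sS S 0, sS S (k - 1)})" using f(2) S by blast
    then show "\<exists>vs. rainbow_cycle n c vs \<and> S \<subseteq> set vs"
      using good_cycle[OF f(1)] unfolding c_def by blast
  qed
  then show ?thesis using ec by blast
qed

lemma upper_large:
  assumes k: "2 \<le> k"
  shows "\<exists>N. \<forall>n\<ge>N. \<exists>c. edge_colouring n (2 * k - 1) c \<and> k_rainbow_cyclic n k c"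
proof -
  let ?m = "2 * k - 1"
  have p1: "1 \<le> real ?m ^ (2 * k - 2)" using k by (intro one_le_power) auto
  have r0: "0 \<le> rho k" using p1 unfolding rho_def by (simp add: field_simps)
  have r1: "rho k < 1" using p1 k unfolding rho_def by simp
  define \<epsilon> where "\<epsilon> = 1 / (real k ^ k * real ?m)"
  have e0: "0 < \<epsilon>" using k unfolding \<epsilon>_def by simp
  obtain T0 where T0: "\<forall>T\<ge>T0. (real T + 2) ^ k * rho k ^ T < \<epsilon>"
    using asymp_small[OF r0 r1 _ e0, of k] k by auto
  show ?thesis
  proof (rule exI[of _ "k + (k - 1) * T0"], intro allI impI)
    fix n assume n: "k + (k - 1) * T0 \<le> n"
    define T where "T = (n - k) div (k - 1)"
    have k1: "0 < k - 1" using k by simp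
    have "T0 = ((k - 1) * T0) div (k - 1)" using k1 by simp
    also have "\<dots> \<le> T" unfolding T_def using n by (intro div_le_mono) linarith
    finally have TT: "T0 \<le> T" .
    have "n - k < (T + 1) * (k - 1)"
    proof -
      have "n - k = T * (k - 1) + (n - k) mod (k - 1)" unfolding T_def by (rule div_mult_mod_eq[symmetric])
      moreover have "(n - k) mod (k - 1) < k - 1" using k1 by simp
      moreover have "(T + 1) * (k - 1) = T * (k - 1) + (k - 1)" by simp
      ultimately show ?thesis by linarith
    qed
    moreover have "(T + 1) * (k - 1) \<le> (T + 1) * k" by (intro mult_left_mono) auto
    moreover have "k * (T + 2) = k + (T + 1) * k" by (simp add: algebra_simps)
    ultimately have "n \<le> k * (T + 2)" by linarith
    then have "n ^ k \<le> (k * (T + 2)) ^ k" by (rule power_mono) simp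
    moreover have "n choose k \<le> n ^ k" using n by (intro binomial_le_pow) linarith
    ultimately have "n choose k \<le> (k * (T + 2)) ^ k" by linarith
    then have "real (n choose k) \<le> real k ^ k * (real T + 2) ^ k"
      by (metis (mono_tags, lifting) of_nat_add of_nat_le_iff of_nat_mult of_nat_numeral of_nat_power power_mult_distrib)
    then have "real (n choose k) * real ?m * rho k ^ T \<le> real k ^ k * (real T + 2) ^ k * real ?m * rho k ^ T"
      using r0 by (intro mult_right_mono) auto
    also have "\<dots> = (real k ^ k * real ?m) * ((real T + 2) ^ k * rho k ^ T)" by (simp add: algebra_simps)
    also have "\<dots> < (real k ^ k * real ?m) * \<epsilon>"
      using T0 TT k by (intro mult_strict_left_mono) auto
    also have "\<dots> = 1" unfolding \<epsilon>_def using k by simp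
    finally have "real (n choose k) * real ?m * rho k ^ ((n - k) div (k - 1)) < 1"
      unfolding T_def .
    then show "\<exists>c. edge_colouring n ?m c \<and> k_rainbow_cyclic n k c"
      by (rule upper_exists[OF k])
  qed
qed

theorem theorem3p2:
  shows "(\<forall>n\<ge>3. crx 1 n = 3 \<and> crx 2 n = 3) \<and>
         (\<forall>k\<ge>3. \<exists>N. \<forall>n\<ge>N. crx k n = 2 * k - 1)"
proof (rule conjI)
  show "\<forall>n\<ge>3. crx 1 n = 3 \<and> crx 2 n = 3" using crx_small by auto
next
  show "\<forall>k\<ge>3. \<exists>N. \<forall>n\<ge>N. crx k n = 2 * k - 1"
proof (intro allI impI)
  fix k :: nat assume k3: "3 \<le> k"
  then have k: "2 \<le> k" by simp
  obtain N1 where N1: "\<forall>n\<ge>N1. \<exists>c. edge_colouring n (2 * k - 1) c \<and> k_rainbow_cyclic n k c"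
    using upper_large[OF k] by blast
  obtain R where R: "\<forall>n\<ge>R. \<forall>m c. edge_colouring n m c \<and> k_rainbow_cyclic n k c \<longrightarrow> 2 * k - 1 \<le> m"
    using lower_b[OF k] by blast
  show "\<exists>N. \<forall>n\<ge>N. crx k n = 2 * k - 1"
  proof (intro exI allI impI)
    fix n assume n: "max N1 R \<le> n"
    show "crx k n = 2 * k - 1"
      unfolding crx_def
    proof (rule Least_equality)
      show "\<exists>c. edge_colouring n (2 * k - 1) c \<and> k_rainbow_cyclic n k c" using N1 n by auto
    next
      fix m assume "\<exists>c. edge_colouring n m c \<and> k_rainbow_cyclic n k c"
      then show "2 * k - 1 \<le> m" using R n by auto
    qed
  qed
qed
qed

end
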